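(* Let $x_0 \in \mathcal{X}_n \subset \mathbb{R}^2$ and assume $\phi\in C^\infty(\mathbb{R}^2)$ is quasiconcave with $|\nabla\phi(x_0)|>0$. Suppose $V_h(x_0)$ satisfies: (i) if $p\in V_h(x_0)$ then $-p\in V_h(x_0)$; and (ii) if $p\in V_h(x_0)$ then there exists $q\in V_h(x_0)$ with $p\cdot q = 0$. Then $P_h^-[\phi](x_0)$ is nonempty.
   Context: $\mathcal{X}_n=\{x_1,\dots,x_n\}\subset\mathbb{R}^2$ is a finite point cloud; each $x\in\mathcal{X}_n$ has a neighbor set $N_h(x)\subset\mathcal{X}_n\setminus\{x\}$, and $V_h(x):=\{y-x : y\in N_h(x)\}$. For a function $u$ defined on $\mathcal{X}_n$ (or on a superset) and $x\in\mathcal{X}_n$, \[ P_h^-[u](x) := \{p\in\mathbb{R}^2 : -p\in V_h(x), \text{ and for all } y\in N_h(x),\ p\cdot(y-x)<0 \implies u(y)\le u(x)\}. \] A function $\phi$ is quasiconcave if $\phi(\lambda x + (1-\lambda)y)\ge\min(\phi(x),\phi(y))$ for all $x,y$ and $0<\lambda<1$. *)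

theory Defs
  imports "HOL-Analysis.Analysis"
begin

definition quasiconcave :: "('a::real_vector \<Rightarrow> real) \<Rightarrow> bool" where
  "quasiconcave \<phi> \<longleftrightarrow>
     (\<forall>x y t. 0 < t \<and> t < 1 \<longrightarrow> \<phi> (t *\<^sub>R x + (1 - t) *\<^sub>R y) \<ge> min (\<phi> x) (\<phi> y))"

fun C_k :: "nat \<Rightarrow> ('a::real_normed_vector \<Rightarrow> real) \<Rightarrow> bool" where
  "C_k 0 f \<longleftrightarrow> continuous_on UNIV f"
| "C_k (Suc k) f \<longleftrightarrow> (\<exists>f'. (\<forall>x. (f has_derivative f' x) (at x)) \<and> (\<forall>v. C_k k (\<lambda>x. f' x v)))"

definition smooth :: "('a::real_normed_vector \<Rightarrow> real) \<Rightarrow> bool" where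
  "smooth f \<longleftrightarrow> (\<forall>k. C_k k f)"

definition Vh :: "('a::ab_group_add \<Rightarrow> 'a set) \<Rightarrow> 'a \<Rightarrow> 'a set" where
  "Vh N x = (\<lambda>y. y - x) ` N x"

definition P_minus :: "(real^2 \<Rightarrow> (real^2) set) \<Rightarrow> (real^2 \<Rightarrow> real) \<Rightarrow> real^2 \<Rightarrow> (real^2) set" where
  "P_minus N u x = {p. - p \<in> Vh N x \<and> (\<forall>y\<in>N x. p \<bullet> (y - x) < 0 \<longrightarrow> u y \<le> u x)}"

end

theory Submission
  imports Defs
begin

lemma inner2: "(a::real^2) \<bullet> b = a$1*b$1 + a$2*b$2"
  by (simp add: inner_vec_def sum_2)

lemma qc_ge:
  fixes \<phi> :: "real^2 \<Rightarrow> real"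
  assumes qc: "quasiconcave \<phi>"
    and d: "(\<phi> has_derivative (\<lambda>v. g \<bullet> v)) (at x0)"
    and z: "\<phi> z \<ge> \<phi> x0"
  shows "g \<bullet> (z - x0) \<ge> 0"
proof (rule ccontr)
  assume neg: "\<not> ?thesis"
  let ?d = "z - x0"
  have "((\<lambda>t. \<phi> (x0 + t *\<^sub>R ?d)) has_real_derivative (g \<bullet> ?d)) (at 0)"
  proof -
    have l: "((\<lambda>t::real. x0 + t *\<^sub>R ?d) has_derivative (\<lambda>t. t *\<^sub>R ?d)) (at 0)"
      by (auto intro!: derivative_eq_intros)
    have d0: "(\<phi> has_derivative (\<lambda>v. g \<bullet> v)) (at (x0 + 0 *\<^sub>R ?d))" using d by simp
    have "((\<lambda>t. \<phi> (x0 + t *\<^sub>R ?d)) has_derivative (\<lambda>t. g \<bullet> (t *\<^sub>R ?d))) (at 0)"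
      using diff_chain_at[OF l d0] by (simp add: o_def)
    then show ?thesis
      by (simp add: has_field_derivative_def mult.commute[of _ "g \<bullet> ?d"])
  qed
  then obtain e where e: "e > 0" "\<forall>h>0. h < e \<longrightarrow> \<phi> (x0 + (0 + h) *\<^sub>R ?d) < \<phi> (x0 + 0 *\<^sub>R ?d)"
    using DERIV_neg_dec_right[of "\<lambda>t. \<phi> (x0 + t *\<^sub>R ?d)" "g \<bullet> ?d" 0] neg by force
  define t where "t = min (e/2) (1/2)"
  have t: "0 < t" "t < 1" "t < e" using e by (auto simp: t_def)
  have "\<phi> (x0 + t *\<^sub>R ?d) < \<phi> x0" using e t by auto
  moreover have "x0 + t *\<^sub>R ?d = t *\<^sub>R z + (1 - t) *\<^sub>R x0"
    by (simp add: algebra_simps)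
  moreover have "\<phi> (t *\<^sub>R z + (1 - t) *\<^sub>R x0) \<ge> min (\<phi> z) (\<phi> x0)"
    using qc t unfolding quasiconcave_def by blast
  ultimately show False using z by simp
qed

lemma qc_gt:
  fixes \<phi> :: "real^2 \<Rightarrow> real"
  assumes qc: "quasiconcave \<phi>" and c: "continuous_on UNIV \<phi>"
    and d: "(\<phi> has_derivative (\<lambda>v. g \<bullet> v)) (at x0)"
    and g: "g \<noteq> 0"
    and y: "\<phi> y > \<phi> x0"
  shows "g \<bullet> (y - x0) > 0"
proof -
  have "continuous_on UNIV (\<lambda>e::real. \<phi> (y - e *\<^sub>R g))"
    by (intro continuous_on_compose2[OF c]) (auto intro!: continuous_intros)
  then have "isCont (\<lambda>e::real. \<phi> (y - e *\<^sub>R g)) 0"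
    by (simp add: continuous_on_eq_continuous_at)
  then obtain dl where dl: "dl > 0" "\<forall>e. dist e 0 < dl \<longrightarrow> dist (\<phi> (y - e *\<^sub>R g)) (\<phi> (y - 0 *\<^sub>R g)) < \<phi> y - \<phi> x0"
    using y unfolding continuous_at_eps_delta by (metis diff_gt_0_iff_gt)
  define e where "e = dl / 2"
  have "dist e 0 < dl" "e > 0" using dl by (auto simp: e_def)
  then have "\<bar>\<phi> (y - e *\<^sub>R g) - \<phi> y\<bar> < \<phi> y - \<phi> x0" using dl(2) by (auto simp: dist_real_def)
  then have "\<phi> (y - e *\<^sub>R g) > \<phi> x0" by linarith
  then have "g \<bullet> (y - e *\<^sub>R g - x0) \<ge> 0" using qc_ge[OF qc d] by simp
  moreover have "g \<bullet> g > 0" using g by simp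
  ultimately have "g \<bullet> (y - x0) \<ge> e * (g \<bullet> g)" by (simp add: algebra_simps)
  moreover have "e * (g \<bullet> g) > 0" using \<open>e > 0\<close> \<open>g \<bullet> g > 0\<close> by simp
  ultimately show ?thesis by linarith
qed

lemma cross_nonneg:
  fixes g1 g2 u1 u2 v1 v2 :: real
  assumes su: "g1*u1+g2*u2 > 0" and sv: "g1* v1+g2* v2 > 0"
    and le: "(-g2*u1+g1*u2)/(g1*u1+g2*u2) \<le> (-g2* v1+g1* v2)/(g1* v1+g2* v2)"
    and g: "g1 \<noteq> 0 \<or> g2 \<noteq> 0"
  shows "u1* v2-u2* v1 \<ge> 0"
proof -
  have a: "(-g2*u1+g1*u2)*(g1* v1+g2* v2) \<le> (-g2* v1+g1* v2)*(g1*u1+g2*u2)"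
    using le su sv by (simp add: divide_simps)
  have id: "(g1^2+g2^2)*(u1* v2-u2* v1) = (-g2* v1+g1* v2)*(g1*u1+g2*u2) - (-g2*u1+g1*u2)*(g1* v1+g2* v2)"
    by (simp add: algebra_simps power2_eq_square)
  have gp: "g1^2+g2^2 > 0" using g by (simp add: sum_power2_gt_zero_iff)
  have "(g1^2+g2^2)*(u1* v2-u2* v1) \<ge> 0" using id a by linarith
  then show ?thesis using gp by (simp add: zero_le_mult_iff)
qed

lemma decomp2:
  fixes p1 p2 u1 u2 v1 v2 :: real
  shows "(u1^2+u2^2)*(p1* v1+p2* v2) = (p1*u1+p2*u2)*(u1* v1+u2* v2) + (-p1*u2+p2*u1)*(u1* v2-u2* v1)"
  by (simp add: algebra_simps power2_eq_square)

lemma perp_nz: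
  fixes q1 q2 u1 u2 :: real
  assumes "q1*u1+q2*u2 = 0" "u1 \<noteq> 0 \<or> u2 \<noteq> 0" "q1 \<noteq> 0 \<or> q2 \<noteq> 0"
  shows "-q1*u2+q2*u1 \<noteq> 0"
proof
  assume h: "-q1*u2+q2*u1 = 0"
  have "(u1^2+u2^2)*q1 = (q1*u1+q2*u2)*u1 - (-q1*u2+q2*u1)*u2" by (simp add: algebra_simps power2_eq_square)
  moreover have "(u1^2+u2^2)*q2 = (q1*u1+q2*u2)*u2 + (-q1*u2+q2*u1)*u1" by (simp add: algebra_simps power2_eq_square)
  moreover have "u1^2+u2^2 > 0" using assms(2) by (simp add: sum_power2_gt_zero_iff)
  ultimately have "q1 = 0" "q2 = 0" using assms(1) h by auto
  then show False using assms(3) by simp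
qed

lemma vec2_eqI: "(a::real^2)$1 = b$1 \<Longrightarrow> a$2 = b$2 \<Longrightarrow> a = b"
  by (metis (full_types) exhaust_2 vec_eq_iff)

theorem theorem2:
  fixes X :: "(real^2) set" and N :: "real^2 \<Rightarrow> (real^2) set"
    and \<phi> :: "real^2 \<Rightarrow> real" and x0 g :: "real^2"
  assumes "finite X"
    and "\<forall>x\<in>X. N x \<subseteq> X - {x}"
    and "x0 \<in> X"
    and "N x0 \<noteq> {}"
    and "smooth \<phi>"
    and "quasiconcave \<phi>"
    and "(\<phi> has_derivative (\<lambda>v. g \<bullet> v)) (at x0)"
    and "norm g > 0"
    and "\<forall>p\<in>Vh N x0. - p \<in> Vh N x0"
    and "\<forall>p\<in>Vh N x0. \<exists>q\<in>Vh N x0. p \<bullet> q = 0"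
  shows "P_minus N \<phi> x0 \<noteq> {}"
proof -
  note fX = assms(1) and NX = assms(2) and x0X = assms(3) and Nne = assms(4)
    and qc = assms(6) and d = assms(7) and sym = assms(9) and orth = assms(10)
  define V where "V = Vh N x0"
  have c: "continuous_on UNIV \<phi>" using assms(5) unfolding smooth_def
    by (metis C_k.simps(1))
  have g0: "g \<noteq> 0" using assms(8) by auto
  have Nsub: "N x0 \<subseteq> X - {x0}" using NX x0X by blast
  have fV: "finite V" unfolding V_def Vh_def using Nsub fX
    by (meson finite_Diff finite_imageI finite_subset)
  have Vnz: "\<And>v. v \<in> V \<Longrightarrow> v \<noteq> 0" unfolding V_def Vh_def using Nsub by auto
  have key: "\<And>y. y \<in> N x0 \<Longrightarrow> \<phi> y > \<phi> x0 \<Longrightarrow> y - x0 \<in> V \<and> g \<bullet> (y - x0) > 0"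
    using qc_gt[OF qc c d g0] unfolding V_def Vh_def by auto
  define S where "S = {v\<in>V. g \<bullet> v > 0}"
  show ?thesis
  proof (cases "S = {}")
    case True
    obtain y where y: "y \<in> N x0" using Nne by auto
    have "y - x0 \<in> V" using y unfolding V_def Vh_def by auto
    then have "-(y - x0) \<in> V" using sym V_def by auto
    have "(y - x0) \<in> P_minus N \<phi> x0"
      unfolding P_minus_def
    proof (intro CollectI conjI ballI impI)
      show "- (y - x0) \<in> Vh N x0" using \<open>-(y - x0) \<in> V\<close> V_def by simp
      fix z assume z: "z \<in> N x0" "(y - x0) \<bullet> (z - x0) < 0"
      show "\<phi> z \<le> \<phi> x0"
      proof (rule ccontr)
        assume "\<not> ?thesis"
        then have "z - x0 \<in> S" using key[OF z(1)] S_def by auto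
        then show False using True by simp
      qed
    qed
    then show ?thesis by blast
  next
    case False
    define f where "f = (\<lambda>v::real^2. (-g$2* v$1+g$1* v$2)/(g$1* v$1+g$2* v$2))"
    have fS: "finite S" using fV S_def by simp
    define m where "m = Min (f ` S)"
    have "m \<in> f ` S" unfolding m_def using fS False by (intro Min_in) auto
    then obtain u where uS: "u \<in> S" and fu: "f u = m" by auto
    have umin: "\<And>v. v \<in> S \<Longrightarrow> f u \<le> f v" using fu fS m_def by auto
    have uV: "u \<in> V" using uS S_def by auto
    obtain q where qV: "q \<in> V" and uq: "u \<bullet> q = 0" using orth uV V_def by auto
    have qu: "q$1*u$1+q$2*u$2 = 0" using uq by (simp add: inner2 mult.commute)
    have unz: "u$1 \<noteq> 0 \<or> u$2 \<noteq> 0" using Vnz[OF uV] by (metis vec2_eqI zero_index)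
    have qnz: "q$1 \<noteq> 0 \<or> q$2 \<noteq> 0" using Vnz[OF qV] by (metis vec2_eqI zero_index)
    have qJ: "-q$1*u$2+q$2*u$1 \<noteq> 0" using perp_nz[OF qu unz qnz] .
    define p where "p = (if -q$1*u$2+q$2*u$1 > 0 then q else -q)"
    have pJ: "-p$1*u$2+p$2*u$1 > 0" using qJ unfolding p_def by auto
    have pu: "p$1*u$1+p$2*u$2 = 0" using qu unfolding p_def by auto
    have pV: "p \<in> V" "-p \<in> V" using qV sym V_def unfolding p_def by auto
    have "p \<in> P_minus N \<phi> x0"
      unfolding P_minus_def
    proof (intro CollectI conjI ballI impI)
      show "- p \<in> Vh N x0" using pV V_def by simp
      fix z assume z: "z \<in> N x0" "p \<bullet> (z - x0) < 0"
      show "\<phi> z \<le> \<phi> x0"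
      proof (rule ccontr)
        assume "\<not> ?thesis"
        then have vS: "z - x0 \<in> S" using key[OF z(1)] S_def by auto
        define v where "v = z - x0"
        have le: "f u \<le> f v" using umin vS v_def by simp
        have su: "g$1*u$1+g$2*u$2 > 0" using uS S_def by (simp add: inner2)
        have sv: "g$1* v$1+g$2* v$2 > 0" using vS S_def v_def by (simp add: inner2)
        have gnz: "g$1 \<noteq> 0 \<or> g$2 \<noteq> 0" using g0 by (metis vec2_eqI zero_index)
        have cr: "u$1* v$2-u$2* v$1 \<ge> 0"
          using cross_nonneg[OF su sv _ gnz] le unfolding f_def by simp
        have "(u$1^2+u$2^2)*(p$1* v$1+p$2* v$2) \<ge> 0"
          unfolding decomp2 using pu pJ cr by simp
        moreover have "u$1^2+u$2^2 > 0" using unz by (simp add: sum_power2_gt_zero_iff)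
        ultimately have "p$1* v$1+p$2* v$2 \<ge> 0" by (simp add: zero_le_mult_iff)
        then show False using z(2) v_def by (simp add: inner2)
      qed
    qed
    then show ?thesis by blast
  qed
qed

end
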